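(* For any voter matrix $V$ with $t$ topics, there exists a proposal $p$ supported by $V$ with $R_p\ge \frac12-\frac1t$. In particular, $r_V\ge \frac23-\frac{4}{3t}$.
   Context: A voter matrix with $t$ topics is a matrix $V\in\{Y,N\}^{n\times t}$ for positive integers $n,t$ (rows are voters), subject to the standing assumption that in every column the number of entries $Y$ is at least the number of entries $N$. A proposal is a vector $p\in\{Y,N\}^t$. A voter $v$ supports $p$ if the Hamming distance between $v$ and $p$ is at most $t/2$; $p$ is supported by $V$ if at least $n/2$ rows of $V$ support $p$. For $i=1,\dots,t$ let $m_i$ be the fraction of entries $Y$ in column $i$ of $V$, and $m_V=\frac1t\sum_i m_i$. For a proposal $p$ let $m_i'=m_i$ if $p_i=Y$ and $m_i'=1-m_i$ if $p_i=N$; set $R_p=\frac1t\sum_i m_i'$ and $r_p=R_p/m_V$. $r_V$ is the maximum of $r_p$ over all proposals $p$ supported by $V$. *)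

theory Defs
  imports Complex_Main
begin

(* A voter matrix with n voters and t topics is V :: nat => nat => bool,
   V j i = True meaning voter j says Y on topic i (only j < n, i < t matter).
   A proposal is p :: nat => bool with p i = True meaning Y; proposals are
   normalised to be False outside {..<t}. *)

definition voter_matrix :: "nat \<Rightarrow> nat \<Rightarrow> (nat \<Rightarrow> nat \<Rightarrow> bool) \<Rightarrow> bool" where
  "voter_matrix n t V \<longleftrightarrow> 0 < n \<and> 0 < t \<and>
     (\<forall>i<t. card {j\<in>{..<n}. \<not> V j i} \<le> card {j\<in>{..<n}. V j i})"

definition proposals :: "nat \<Rightarrow> (nat \<Rightarrow> bool) set" where
  "proposals t = {p. \<forall>i\<ge>t. \<not> p i}"

definition hamming :: "nat \<Rightarrow> (nat \<Rightarrow> bool) \<Rightarrow> (nat \<Rightarrow> bool) \<Rightarrow> nat" where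
  "hamming t v p = card {i\<in>{..<t}. v i \<noteq> p i}"

definition supports :: "nat \<Rightarrow> (nat \<Rightarrow> bool) \<Rightarrow> (nat \<Rightarrow> bool) \<Rightarrow> bool" where
  "supports t v p \<longleftrightarrow> real (hamming t v p) \<le> real t / 2"

definition supported :: "nat \<Rightarrow> nat \<Rightarrow> (nat \<Rightarrow> nat \<Rightarrow> bool) \<Rightarrow> (nat \<Rightarrow> bool) \<Rightarrow> bool" where
  "supported n t V p \<longleftrightarrow> real (card {j\<in>{..<n}. supports t (V j) p}) \<ge> real n / 2"

definition mfrac :: "nat \<Rightarrow> (nat \<Rightarrow> nat \<Rightarrow> bool) \<Rightarrow> nat \<Rightarrow> real" where
  "mfrac n V i = real (card {j\<in>{..<n}. V j i}) / real n"

definition mV :: "nat \<Rightarrow> nat \<Rightarrow> (nat \<Rightarrow> nat \<Rightarrow> bool) \<Rightarrow> real" where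
  "mV n t V = (\<Sum>i<t. mfrac n V i) / real t"

definition Rp :: "nat \<Rightarrow> nat \<Rightarrow> (nat \<Rightarrow> nat \<Rightarrow> bool) \<Rightarrow> (nat \<Rightarrow> bool) \<Rightarrow> real" where
  "Rp n t V p = (\<Sum>i<t. if p i then mfrac n V i else 1 - mfrac n V i) / real t"

definition rp :: "nat \<Rightarrow> nat \<Rightarrow> (nat \<Rightarrow> nat \<Rightarrow> bool) \<Rightarrow> (nat \<Rightarrow> bool) \<Rightarrow> real" where
  "rp n t V p = Rp n t V p / mV n t V"

definition rV :: "nat \<Rightarrow> nat \<Rightarrow> (nat \<Rightarrow> nat \<Rightarrow> bool) \<Rightarrow> real" where
  "rV n t V = Max (rp n t V ` {p \<in> proposals t. supported n t V p})"

end

theory Submission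
  imports Defs
begin

lemma card_filter_real: "finite A \<Longrightarrow> real (card {x\<in>A. P x}) = (\<Sum>x\<in>A. of_bool (P x))"
proof -
  assume "finite A"
  moreover have "{x\<in>A. P x} = A \<inter> {x. P x}" by blast
  ultimately show ?thesis by simp
qed

lemma fin_props: "finite (proposals t)"
proof (rule finite_subset)
  show "proposals t \<subseteq> (\<lambda>S i. i \<in> S) ` Pow {..<t}"
  proof
    fix p assume "p \<in> proposals t"
    hence "{i. p i} \<in> Pow {..<t}" unfolding proposals_def by (auto simp: not_le[symmetric])
    moreover have "p = (\<lambda>i. i \<in> {i. p i})" by simp
    ultimately show "p \<in> (\<lambda>S i. i \<in> S) ` Pow {..<t}" by blast
  qed
qed simp

lemma card_part: "finite A \<Longrightarrow> card {x\<in>A. P x} + card {x\<in>A. \<not> P x} = card A"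
proof -
  assume f: "finite A"
  have e: "{x\<in>A. P x} \<union> {x\<in>A. \<not> P x} = A" by auto
  have "card ({x\<in>A. P x} \<union> {x\<in>A. \<not> P x}) = card {x\<in>A. P x} + card {x\<in>A. \<not> P x}"
    by (rule card_Un_disjoint) (use f in auto)
  thus ?thesis using e by simp
qed

lemma ham_compl:
  "hamming t v p + hamming t v (\<lambda>i. i<t \<and> \<not> p i) = t"
proof -
  have "{i\<in>{..<t}. v i \<noteq> (i<t \<and> \<not> p i)} = {i\<in>{..<t}. \<not> (v i \<noteq> p i)}" by auto
  thus ?thesis unfolding hamming_def using card_part[of "{..<t}" "\<lambda>i. v i \<noteq> p i"] by simp
qed

lemma supp_compl:
  "supported n t V p \<or> supported n t V (\<lambda>i. i<t \<and> \<not> p i)"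
proof -
  let ?A = "{j\<in>{..<n}. supports t (V j) p}"
  let ?B = "{j\<in>{..<n}. supports t (V j) (\<lambda>i. i<t \<and> \<not> p i)}"
  have "{..<n} \<subseteq> ?A \<union> ?B"
  proof
    fix j assume j: "j \<in> {..<n}"
    have "hamming t (V j) p + hamming t (V j) (\<lambda>i. i<t \<and> \<not> p i) = t" by (rule ham_compl)
    hence "real (hamming t (V j) p) \<le> real t / 2 \<or> real (hamming t (V j) (\<lambda>i. i<t \<and> \<not> p i)) \<le> real t / 2"
      by linarith
    with j show "j \<in> ?A \<union> ?B" unfolding supports_def by auto
  qed
  hence "card {..<n} \<le> card (?A \<union> ?B)" by (intro card_mono) auto
  hence "n \<le> card (?A \<union> ?B)" by simp
  also have "\<dots> \<le> card ?A + card ?B" by (rule card_Un_le)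
  finally have "real n \<le> real (card ?A) + real (card ?B)" by linarith
  thus ?thesis unfolding supported_def by linarith
qed

lemma mfrac_bounds:
  assumes "voter_matrix n t V" "i < t"
  shows "1/2 \<le> mfrac n V i" "mfrac n V i \<le> 1"
proof -
  have n: "0 < n" using assms unfolding voter_matrix_def by auto
  have le: "card {j\<in>{..<n}. \<not> V j i} \<le> card {j\<in>{..<n}. V j i}"
    using assms unfolding voter_matrix_def by auto
  have sum: "card {j\<in>{..<n}. \<not> V j i} + card {j\<in>{..<n}. V j i} = n"
    using card_part[of "{..<n}" "\<lambda>j. V j i"] by simp
  have "real n \<le> 2 * real (card {j\<in>{..<n}. V j i})" using sum le by linarith
  thus "1/2 \<le> mfrac n V i" unfolding mfrac_def using n by (simp add: field_simps)
  have "real (card {j\<in>{..<n}. V j i}) \<le> real n" using sum by linarith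
  thus "mfrac n V i \<le> 1" unfolding mfrac_def using n by (simp add: field_simps)
qed

lemma mV_ge:
  assumes "voter_matrix n t V"
  shows "1/2 \<le> mV n t V"
proof -
  have t: "0 < t" using assms unfolding voter_matrix_def by auto
  have "(\<Sum>i<t. (1/2::real)) \<le> (\<Sum>i<t. mfrac n V i)"
    by (rule sum_mono) (use mfrac_bounds[OF assms] in auto)
  thus ?thesis unfolding mV_def using t by (simp add: field_simps)
qed

lemma Rp_nonneg:
  assumes "voter_matrix n t V"
  shows "0 \<le> Rp n t V p"
proof -
  have "0 \<le> (\<Sum>i<t. if p i then mfrac n V i else 1 - mfrac n V i)"
    by (rule sum_nonneg) (use mfrac_bounds[OF assms] in fastforce)
  thus ?thesis unfolding Rp_def by simp
qed

lemma Rp_compl: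
  assumes "0 < t"
  shows "Rp n t V (\<lambda>i. i<t \<and> \<not> p i) = 1 - Rp n t V p"
proof -
  have "(\<Sum>i<t. if i<t \<and> \<not> p i then mfrac n V i else 1 - mfrac n V i)
      = (\<Sum>i<t. 1 - (if p i then mfrac n V i else 1 - mfrac n V i))"
    by (rule sum.cong) auto
  also have "\<dots> = real t - (\<Sum>i<t. if p i then mfrac n V i else 1 - mfrac n V i)"
    by (simp add: sum_subtractf)
  finally show ?thesis unfolding Rp_def using assms by (simp add: field_simps)
qed

lemma Rp_step:
  assumes "voter_matrix n t V" "k < t"
  shows "Rp n t V (\<lambda>i. k \<le> i \<and> i < t) \<le> Rp n t V (\<lambda>i. Suc k \<le> i \<and> i < t) + 1 / real t"
proof -
  let ?f = "\<lambda>i. if k \<le> i \<and> i < t then mfrac n V i else 1 - mfrac n V i"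
  let ?g = "\<lambda>i. if Suc k \<le> i \<and> i < t then mfrac n V i else 1 - mfrac n V i"
  have "(\<Sum>i<t. ?f i) - (\<Sum>i<t. ?g i) = (\<Sum>i<t. ?f i - ?g i)" by (simp add: sum_subtractf)
  also have "\<dots> = (\<Sum>i<t. if i = k then 2 * mfrac n V k - 1 else 0)"
    by (rule sum.cong) auto
  also have "\<dots> = 2 * mfrac n V k - 1" using assms(2) by simp
  also have "\<dots> \<le> 1" using mfrac_bounds[OF assms] by linarith
  finally have "(\<Sum>i<t. ?f i) \<le> (\<Sum>i<t. ?g i) + 1" by linarith
  moreover have t: "0 < real t" using assms by simp
  ultimately show ?thesis unfolding Rp_def by (simp add: field_simps)
qed

lemma part1:
  assumes V: "voter_matrix n t V"
  shows "\<exists>p\<in>proposals t. supported n t V p \<and> Rp n t V p \<ge> 1/2 - 1 / real t"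
proof -
  have t: "0 < t" using V unfolding voter_matrix_def by auto
  define P where "P k \<longleftrightarrow> 1/2 \<le> Rp n t V (\<lambda>i. k \<le> i \<and> i < t)" for k
  have R0: "Rp n t V (\<lambda>i. 0 \<le> i \<and> i < t) = mV n t V"
    unfolding Rp_def mV_def by (intro arg_cong[where f="\<lambda>x. x / real t"] sum.cong) auto
  have P0: "P 0" unfolding P_def R0 using mV_ge[OF V] .
  have Rt: "Rp n t V (\<lambda>i. t \<le> i \<and> i < t) = 1 - mV n t V"
    unfolding Rp_def mV_def using t by (simp add: sum_subtractf field_simps)
  have "\<exists>k. k \<le> t \<and> P k \<and> (k < t \<longrightarrow> \<not> P (Suc k))"
  proof (rule ccontr)
    assume H: "\<not> ?thesis"
    have "k \<le> t \<Longrightarrow> P k" for k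
    proof (induction k)
      case 0 then show ?case using P0 by simp
    next
      case (Suc k) then show ?case using H by auto
    qed
    with H show False by auto
  qed
  then obtain k where k: "k \<le> t" "P k" "k < t \<longrightarrow> \<not> P (Suc k)" by blast
  define p where "p = (\<lambda>i. k \<le> i \<and> i < t)"
  have pp: "p \<in> proposals t" unfolding p_def proposals_def by auto
  have qp: "(\<lambda>i. i<t \<and> \<not> p i) \<in> proposals t" unfolding proposals_def by auto
  have lo: "1/2 \<le> Rp n t V p" using k(2) unfolding P_def p_def .
  have hi: "Rp n t V p \<le> 1/2 + 1 / real t"
  proof (cases "k < t")
    case True
    then show ?thesis using Rp_step[OF V True] k(3) unfolding P_def p_def by linarith
  next
    case False
    hence "k = t" using k(1) by simp
    moreover have "0 \<le> 1 / real t" by simp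
    moreover have "Rp n t V p = 1 - mV n t V" using Rt \<open>k = t\<close> unfolding p_def by simp
    ultimately show ?thesis using mV_ge[OF V] by linarith
  qed
  show ?thesis
  proof (cases "supported n t V p")
    case True
    moreover have "1/2 - 1 / real t \<le> Rp n t V p" using lo
      by (smt (verit) of_nat_0_le_iff divide_nonneg_nonneg)
    ultimately show ?thesis using pp by (intro bexI[of _ p]) auto
  next
    case False
    hence "supported n t V (\<lambda>i. i<t \<and> \<not> p i)" using supp_compl by blast
    then show ?thesis using qp hi Rp_compl[OF t, of n V p]
      by (intro bexI[of _ "\<lambda>i. i<t \<and> \<not> p i"]) auto
  qed
qed

lemma allY_supported:
  assumes V: "voter_matrix n t V" and m: "3/4 < mV n t V"
  shows "supported n t V (\<lambda>i. i < t)"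
proof -
  have t: "0 < t" and n: "0 < n" using V unfolding voter_matrix_def by auto
  define h where "h j = real (hamming t (V j) (\<lambda>i. i < t))" for j
  have h: "h j = (\<Sum>i<t. of_bool (\<not> V j i))" for j
    unfolding h_def hamming_def by (subst card_filter_real) auto
  have cnt: "real (card {j\<in>{..<n}. \<not> V j i}) = real n - real n * mfrac n V i" for i
  proof -
    have "card {j\<in>{..<n}. \<not> V j i} + card {j\<in>{..<n}. V j i} = n"
      using card_part[of "{..<n}" "\<lambda>j. V j i"] by simp
    thus ?thesis unfolding mfrac_def using n by (simp add: field_simps)
  qed
  have "(\<Sum>j<n. h j) = (\<Sum>i<t. \<Sum>j<n. of_bool (\<not> V j i))"
    unfolding h by (rule sum.swap)
  also have "\<dots> = (\<Sum>i<t. real n - real n * mfrac n V i)"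
  proof (rule sum.cong[OF refl])
    fix i
    have "(\<Sum>j<n. of_bool (\<not> V j i)) = real (card {j\<in>{..<n}. \<not> V j i})"
      by (rule card_filter_real[symmetric]) simp
    thus "(\<Sum>j<n. of_bool (\<not> V j i)) = real n - real n * mfrac n V i" using cnt[of i] by linarith
  qed
  also have "\<dots> = real t * real n * (1 - mV n t V)"
    unfolding mV_def using t by (simp add: sum_subtractf sum_distrib_left[symmetric] field_simps)
  also have "\<dots> < real t * real n / 4" using m t n by (simp add: field_simps)
  finally have S: "(\<Sum>j<n. h j) < real t * real n / 4" .
  define B where "B = {j\<in>{..<n}. \<not> supports t (V j) (\<lambda>i. i < t)}"
  define G where "G = {j\<in>{..<n}. supports t (V j) (\<lambda>i. i < t)}"
  have hB: "j \<in> B \<Longrightarrow> real t / 2 < h j" for j unfolding B_def supports_def h_def by auto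
  have "real (card B) * (real t / 2) = (\<Sum>j\<in>B. real t / 2)" by simp
  also have "\<dots> \<le> (\<Sum>j\<in>B. h j)" by (rule sum_mono) (use hB in force)
  also have "\<dots> \<le> (\<Sum>j<n. h j)"
    by (rule sum_mono2) (auto simp: B_def h_def)
  finally have "real (card B) * (real t / 2) < real t * real n / 4" using S by linarith
  hence cB: "real (card B) < real n / 2" using t by (simp add: field_simps)
  have "card G + card B = n"
    unfolding G_def B_def using card_part[of "{..<n}" "\<lambda>j. supports t (V j) (\<lambda>i. i < t)"] by simp
  hence "real n / 2 \<le> real (card G)" using cB by linarith
  thus ?thesis unfolding supported_def G_def .
qed

theorem lemma5p2:
  fixes n t :: nat and V :: "nat \<Rightarrow> nat \<Rightarrow> bool"
  assumes "voter_matrix n t V"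
  shows "(\<exists>p\<in>proposals t. supported n t V p \<and> Rp n t V p \<ge> 1/2 - 1 / real t)
         \<and> rV n t V \<ge> 2/3 - 4 / (3 * real t)"
proof
  note V = assms
  show P1: "\<exists>p\<in>proposals t. supported n t V p \<and> Rp n t V p \<ge> 1/2 - 1 / real t"
    by (rule part1[OF V])
  have t: "0 < t" using V unfolding voter_matrix_def by auto
  let ?S = "{p \<in> proposals t. supported n t V p}"
  have fin: "finite (rp n t V ` ?S)" using fin_props by simp
  have ge: "p \<in> ?S \<Longrightarrow> rp n t V p \<le> rV n t V" for p
    unfolding rV_def using fin by (intro Max_ge) auto
  have mpos: "1/2 \<le> mV n t V" by (rule mV_ge[OF V])
  show "rV n t V \<ge> 2/3 - 4 / (3 * real t)"
  proof (cases "mV n t V \<le> 3/4")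
    case True
    from P1 obtain p where p: "p \<in> proposals t" "supported n t V p" "Rp n t V p \<ge> 1/2 - 1 / real t"
      by blast
    have "2/3 - 4 / (3 * real t) \<le> rp n t V p"
    proof (cases "t \<ge> 2")
      case True2: True
      have R0: "0 \<le> Rp n t V p - 0" using Rp_nonneg[OF V] by simp
      have "Rp n t V p / (3/4) \<le> Rp n t V p / mV n t V"
        using Rp_nonneg[OF V, of p] True mpos by (intro divide_left_mono) auto
      moreover have "2/3 - 4 / (3 * real t) \<le> Rp n t V p / (3/4)"
        using p(3) t by (simp add: field_simps)
      ultimately show ?thesis unfolding rp_def by linarith
    next
      case False
      hence "t = 1" using t by simp
      moreover have "0 \<le> rp n t V p" unfolding rp_def using Rp_nonneg[OF V, of p] mpos by simp
      ultimately show ?thesis by simp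
    qed
    also have "\<dots> \<le> rV n t V" using ge p by auto
    finally show ?thesis .
  next
    case False
    have sY: "supported n t V (\<lambda>i. i < t)" using allY_supported[OF V] False by simp
    have pY: "(\<lambda>i. i < t) \<in> proposals t" unfolding proposals_def by auto
    have "Rp n t V (\<lambda>i. i < t) = mV n t V" unfolding Rp_def mV_def by (intro arg_cong[where f="\<lambda>x. x / real t"] sum.cong) auto
    hence "rp n t V (\<lambda>i. i < t) = 1" unfolding rp_def using mpos by simp
    hence "1 \<le> rV n t V" using ge[of "\<lambda>i. i < t"] sY pY by auto
    moreover have "2/3 - 4 / (3 * real t) \<le> 1" using t by (simp add: field_simps)
    ultimately show ?thesis by linarith
  qed
qed

end
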